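(* Consider an $N$-player distributionally robust game (as defined in the context) with ambiguity set $$\mathcal{F} = \{ Q : Q[\mathbf{W}\cdot\mathrm{vec}(\tilde{\mathbf{P}})\le\mathbf{h}] = 1,\ \mathbb{E}_Q[\mathrm{vec}\,\tilde{\mathbf{P}}] = \mathbf{m},\ \mathbb{E}_Q[\|\mathrm{vec}(\tilde{\mathbf{P}})-\mathbf{m}\|_1]\le s\},$$ where $\{\mathbf{P}:\mathbf{W}\mathrm{vec}(\mathbf{P})\le\mathbf{h}\}$ is a bounded polyhedral set containing $\mathbf{m}$ (i.e. $\mathbf{W}\mathbf{m}\le\mathbf{h}$) and $s\ge0$, in which all players are risk neutral ($\varepsilon_i=1$ for all $i$). Then its set of Distributionally Robust Optimization Equilibria equals the set of Nash equilibria of the complete information game with fixed payoff matrix $\boldsymbol{\Psi}$, where $\mathrm{vec}(\boldsymbol{\Psi})=\mathbf{m}$.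
   Context: A finite $N$-player game: player $i$ has actions $\{1,\dots,a_i\}$ and mixed strategy set $S_{a_i} = \{\mathbf{x}^i\in\mathbb{R}^{a_i} : \mathbf{x}^i\ge 0,\ \sum_{j=1}^{a_i} x^i_j = 1\}$; $S=\prod_{i} S_{a_i}$. A payoff matrix $\mathbf{P}\in\mathbb{R}^{N\times\prod_{k=1}^N a_k}$ has entries $\mathbf{P}^i_{(j_1,\dots,j_N)}$, the payoff to player $i$ when each player $k$ plays action $j_k$. The expected payoff is $\pi_i(\mathbf{P};\mathbf{x}^1,\dots,\mathbf{x}^N) = \sum_{j_1=1}^{a_1}\cdots\sum_{j_N=1}^{a_N}\mathbf{P}^i_{(j_1,\dots,j_N)}\prod_{k=1}^N x^k_{j_k}$. Write $\mathbf{x}^{-i}$ for the strategies of all players except $i$, and $(\mathbf{x}^{-i},\mathbf{u}^i)$ for the profile with $\mathbf{x}^i$ replaced by $\mathbf{u}^i$. $\mathrm{vec}(\mathbf{A})$ is the column vector obtained by stacking the rows of $\mathbf{A}$. $\tilde{\mathbf{P}}$ denotes a random payoff matrix. For a loss random variable $L$ and $\varepsilon\in(0,1]$, $Q\text{-CVaR}_\varepsilon(L) = \min_{\zeta\in\mathbb{R}} \zeta + \frac{1}{\varepsilon}\mathbb{E}_Q[L-\zeta]^+$, with $[x]^+=\max\{x,0\}$. Distributionally robust game: commonly known ambiguity set $\mathcal{F}$ of distributions $Q$ of $\tilde{\mathbf{P}}$ and risk levels $\varepsilon_i\in(0,1]$. A profile $(\mathbf{x}^1,\dots,\mathbf{x}^N)\in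 S$ is a Distributionally Robust Optimization Equilibrium iff for every $i$, $\mathbf{x}^i\in\arg\min_{\mathbf{u}^i\in S_{a_i}}\sup_{Q\in\mathcal{F}} Q\text{-CVaR}_{\varepsilon_i}[-\pi_i(\tilde{\mathbf{P}};\mathbf{x}^{-i},\mathbf{u}^i)]$. A Nash equilibrium of the game with fixed payoff matrix $\check{\mathbf{P}}$ is a profile in $S$ with $\mathbf{x}^i\in\arg\max_{\mathbf{u}^i\in S_{a_i}}\pi_i(\check{\mathbf{P}};\mathbf{x}^{-i},\mathbf{u}^i)$ for every $i$. *)

theory Defs
  imports "HOL-Probability.Probability"
begin

text \<open>Players are 0..N-1; player k has actions 0..a k - 1 (shifted from 1..a k).
  A payoff matrix P is represented by its vectorisation vec(P), a real function on the
  finite index set {..<N} \<times> profiles, (i, j) \<mapsto> P^i_j.\<close>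

definition profiles :: "nat \<Rightarrow> (nat \<Rightarrow> nat) \<Rightarrow> (nat \<Rightarrow> nat) set" where
  "profiles N a = PiE {..<N} (\<lambda>k. {..<a k})"

definition idx :: "nat \<Rightarrow> (nat \<Rightarrow> nat) \<Rightarrow> (nat \<times> (nat \<Rightarrow> nat)) set" where
  "idx N a = {..<N} \<times> profiles N a"

definition strat_simplex :: "nat \<Rightarrow> (nat \<Rightarrow> real) set" where
  "strat_simplex n = {u. (\<forall>j<n. 0 \<le> u j) \<and> (\<Sum>j<n. u j) = 1}"

definition strat_profiles :: "nat \<Rightarrow> (nat \<Rightarrow> nat) \<Rightarrow> (nat \<Rightarrow> nat \<Rightarrow> real) set" where
  "strat_profiles N a = {x. \<forall>k<N. x k \<in> strat_simplex (a k)}"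

definition payoff ::
  "nat \<Rightarrow> (nat \<Rightarrow> nat) \<Rightarrow> (nat \<times> (nat \<Rightarrow> nat) \<Rightarrow> real) \<Rightarrow> nat \<Rightarrow> (nat \<Rightarrow> nat \<Rightarrow> real) \<Rightarrow> real" where
  "payoff N a p i x = (\<Sum>j\<in>profiles N a. p (i, j) * (\<Prod>k<N. x k (j k)))"

definition cvar :: "'w measure \<Rightarrow> real \<Rightarrow> ('w \<Rightarrow> real) \<Rightarrow> real" where
  "cvar Q eps L = (INF \<zeta>::real. \<zeta> + (1 / eps) * (\<integral>\<omega>. max (L \<omega> - \<zeta>) 0 \<partial>Q))"

definition ambiguity_set ::
  "nat \<Rightarrow> (nat \<Rightarrow> nat) \<Rightarrow> nat \<Rightarrow> (nat \<Rightarrow> nat \<times> (nat \<Rightarrow> nat) \<Rightarrow> real) \<Rightarrow> (nat \<Rightarrow> real)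
   \<Rightarrow> (nat \<times> (nat \<Rightarrow> nat) \<Rightarrow> real) \<Rightarrow> real \<Rightarrow> ((nat \<times> (nat \<Rightarrow> nat) \<Rightarrow> real) measure) set" where
  "ambiguity_set N a R W h m s =
     {Q. prob_space Q \<and> sets Q = sets (Pi\<^sub>M (idx N a) (\<lambda>_. borel)) \<and>
         measure Q {p \<in> space Q. \<forall>r<R. (\<Sum>k\<in>idx N a. W r k * p k) \<le> h r} = 1 \<and>
         (\<forall>k\<in>idx N a. integrable Q (\<lambda>p. p k) \<and> (\<integral>p. p k \<partial>Q) = m k) \<and>
         (\<integral>p. (\<Sum>k\<in>idx N a. \<bar>p k - m k\<bar>) \<partial>Q) \<le> s}"

definition worst_cvar ::
  "nat \<Rightarrow> (nat \<Rightarrow> nat) \<Rightarrow> ((nat \<times> (nat \<Rightarrow> nat) \<Rightarrow> real) measure) set \<Rightarrow> (nat \<Rightarrow> real)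
   \<Rightarrow> nat \<Rightarrow> (nat \<Rightarrow> nat \<Rightarrow> real) \<Rightarrow> real" where
  "worst_cvar N a F eps i x = (SUP Q\<in>F. cvar Q (eps i) (\<lambda>p. - payoff N a p i x))"

definition DRO_equilibrium ::
  "nat \<Rightarrow> (nat \<Rightarrow> nat) \<Rightarrow> ((nat \<times> (nat \<Rightarrow> nat) \<Rightarrow> real) measure) set \<Rightarrow> (nat \<Rightarrow> real)
   \<Rightarrow> (nat \<Rightarrow> nat \<Rightarrow> real) \<Rightarrow> bool" where
  "DRO_equilibrium N a F eps x \<longleftrightarrow> x \<in> strat_profiles N a \<and>
     (\<forall>i<N. \<forall>u\<in>strat_simplex (a i). worst_cvar N a F eps i x \<le> worst_cvar N a F eps i (x(i := u)))"

definition Nash_equilibrium ::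
  "nat \<Rightarrow> (nat \<Rightarrow> nat) \<Rightarrow> (nat \<times> (nat \<Rightarrow> nat) \<Rightarrow> real) \<Rightarrow> (nat \<Rightarrow> nat \<Rightarrow> real) \<Rightarrow> bool" where
  "Nash_equilibrium N a P x \<longleftrightarrow> x \<in> strat_profiles N a \<and>
     (\<forall>i<N. \<forall>u\<in>strat_simplex (a i). payoff N a P i (x(i := u)) \<le> payoff N a P i x)"

end

theory Submission
  imports Defs
begin

lemma cvar1:
  assumes P: "prob_space Q" and L: "integrable Q L"
  shows "cvar Q 1 L = (\<integral>\<omega>. L \<omega> \<partial>Q)"
proof -
  interpret prob_space Q by (rule P)
  define f where "f = (\<lambda>\<zeta>::real. \<zeta> + (\<integral>\<omega>. max (L \<omega> - \<zeta>) 0 \<partial>Q))"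
  have cv: "cvar Q 1 L = (INF \<zeta>. f \<zeta>)" unfolding cvar_def f_def by simp
  have lb: "(\<integral>\<omega>. L \<omega> \<partial>Q) \<le> f \<zeta>" for \<zeta>
  proof -
    have "(\<integral>\<omega>. L \<omega> - \<zeta> \<partial>Q) \<le> (\<integral>\<omega>. max (L \<omega> - \<zeta>) 0 \<partial>Q)"
      by (intro integral_mono) (use L in auto)
    moreover have "(\<integral>\<omega>. L \<omega> - \<zeta> \<partial>Q) = (\<integral>\<omega>. L \<omega> \<partial>Q) - \<zeta>"
      using L by (simp add: prob_space)
    ultimately show ?thesis unfolding f_def by linarith
  qed
  have eq: "f (- real n) = (\<integral>\<omega>. L \<omega> \<partial>Q) + (\<integral>\<omega>. max (- real n - L \<omega>) 0 \<partial>Q)" for n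
  proof -
    have "(\<integral>\<omega>. max (L \<omega> - - real n) 0 \<partial>Q) = (\<integral>\<omega>. (L \<omega> + real n) + max (- real n - L \<omega>) 0 \<partial>Q)"
      by (intro Bochner_Integration.integral_cong) auto
    also have "\<dots> = (\<integral>\<omega>. L \<omega> \<partial>Q) + real n + (\<integral>\<omega>. max (- real n - L \<omega>) 0 \<partial>Q)"
      using L by (simp add: prob_space)
    finally show ?thesis unfolding f_def by simp
  qed
  have lim: "(\<lambda>n. \<integral>\<omega>. max (- real n - L \<omega>) 0 \<partial>Q) \<longlonglongrightarrow> (\<integral>\<omega>. 0 \<partial>Q)"
  proof (rule integral_dominated_convergence[where w="\<lambda>\<omega>. \<bar>L \<omega>\<bar>"])
    show "(\<lambda>\<omega>. 0::real) \<in> borel_measurable Q" by simp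
    show "(\<lambda>\<omega>. max (- real n - L \<omega>) 0) \<in> borel_measurable Q" for n
      using L by measurable
    show "integrable Q (\<lambda>\<omega>. \<bar>L \<omega>\<bar>)" using L by auto
    show "AE x in Q. (\<lambda>n. max (- real n - L x) 0) \<longlonglongrightarrow> 0"
    proof (intro AE_I2 tendsto_eventually)
      fix x
      obtain n0 :: nat where "real n0 \<ge> - L x" using real_arch_simple by blast
      then show "\<forall>\<^sub>F n in sequentially. max (- real n - L x) 0 = 0"
        by (auto simp: eventually_sequentially intro!: exI[of _ n0])
    qed
    show "AE x in Q. norm (max (- real n - L x) 0) \<le> \<bar>L x\<bar>" for n
      by (intro AE_I2) auto
  qed
  have lim2: "(\<lambda>n. f (- real n)) \<longlonglongrightarrow> (\<integral>\<omega>. L \<omega> \<partial>Q)"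
    unfolding eq using tendsto_add[OF tendsto_const lim] by simp
  have bdd: "bdd_below (range f)" by (rule bdd_belowI2[where m="\<integral>\<omega>. L \<omega> \<partial>Q"]) (rule lb)
  have "(INF \<zeta>. f \<zeta>) \<le> (\<integral>\<omega>. L \<omega> \<partial>Q)"
  proof (rule LIMSEQ_le_const[OF lim2], intro exI allI impI)
    fix n :: nat show "(INF \<zeta>. f \<zeta>) \<le> f (- real n)" by (rule cINF_lower[OF bdd]) simp
  qed
  moreover have "(\<integral>\<omega>. L \<omega> \<partial>Q) \<le> (INF \<zeta>. f \<zeta>)"
    by (rule cINF_greatest) (use lb in auto)
  ultimately show ?thesis using cv by linarith
qed

lemma finite_idx: "finite (idx N a)"
  unfolding idx_def profiles_def by (auto intro: finite_PiE)

lemma finite_profiles: "finite (profiles N a)"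
  unfolding profiles_def by (auto intro: finite_PiE)

lemma payoff_exp:
  assumes Q: "Q \<in> ambiguity_set N a R W h m s" and i: "i < N"
  shows "integrable Q (\<lambda>p. - payoff N a p i x)"
    and "(\<integral>p. - payoff N a p i x \<partial>Q) = - payoff N a m i x"
proof -
  have int: "integrable Q (\<lambda>p. p (i, j))" and e: "(\<integral>p. p (i,j) \<partial>Q) = m (i,j)"
    if "j \<in> profiles N a" for j
    using Q that i unfolding ambiguity_set_def idx_def by auto
  show "integrable Q (\<lambda>p. - payoff N a p i x)"
    unfolding payoff_def using int by (intro integrable_minus integrable_sum integrable_mult_left) auto
  have "(\<integral>p. payoff N a p i x \<partial>Q) = (\<Sum>j\<in>profiles N a. (\<integral>p. p (i, j) \<partial>Q) * (\<Prod>k<N. x k (j k)))"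
    unfolding payoff_def
  proof (subst Bochner_Integration.integral_sum)
    show "integrable Q (\<lambda>p. p (i, j) * (\<Prod>k<N. x k (j k)))" if "j \<in> profiles N a" for j
      using int[OF that] by (rule integrable_mult_left)
  qed simp
  also have "\<dots> = payoff N a m i x" unfolding payoff_def using e by simp
  finally show "(\<integral>p. - payoff N a p i x \<partial>Q) = - payoff N a m i x" by simp
qed

lemma ambiguity_nonempty:
  assumes m_in: "\<forall>r<R. (\<Sum>k\<in>idx N a. W r k * m k) \<le> h r" and s: "0 \<le> s"
  shows "ambiguity_set N a R W h m s \<noteq> {}"
proof -
  define M where "M = (Pi\<^sub>M (idx N a) (\<lambda>_. (borel :: real measure)))"
  define m' where "m' = restrict m (idx N a)"
  have sp: "m' \<in> space M" unfolding M_def m'_def space_PiM by auto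
  define Q where "Q = return M m'"
  have meas: "{p \<in> space M. \<forall>r<R. (\<Sum>k\<in>idx N a. W r k * p k) \<le> h r} \<in> sets M"
    unfolding M_def by measurable
  have mc: "(\<lambda>p. p k) \<in> borel_measurable M" if "k \<in> idx N a" for k
    unfolding M_def using that by measurable
  have "Q \<in> ambiguity_set N a R W h m s"
    unfolding ambiguity_set_def
  proof (intro CollectI conjI ballI)
    show "prob_space Q" unfolding Q_def by (rule prob_space_return[OF sp])
    show "sets Q = sets (Pi\<^sub>M (idx N a) (\<lambda>_. borel))" unfolding Q_def M_def by simp
    have "m' \<in> {p \<in> space M. \<forall>r<R. (\<Sum>k\<in>idx N a. W r k * p k) \<le> h r}"
      using sp m_in unfolding m'_def by simp
    then show "measure Q {p \<in> space Q. \<forall>r<R. (\<Sum>k\<in>idx N a. W r k * p k) \<le> h r} = 1"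
      unfolding Q_def by (simp add: measure_return[OF meas])
    fix k assume k: "k \<in> idx N a"
    interpret prob_space Q unfolding Q_def by (rule prob_space_return[OF sp])
    have "finite_measure Q" by unfold_locales
    show "integrable Q (\<lambda>p. p k)"
      unfolding Q_def integrable_iff_bounded using k mc sp
      by (simp add: nn_integral_return)
    show "(\<integral>p. p k \<partial>Q) = m k" unfolding Q_def using k mc sp
      by (simp add: integral_return m'_def)
  next
    have "(\<lambda>p. \<Sum>k\<in>idx N a. \<bar>p k - m k\<bar>) \<in> borel_measurable M"
      using mc by (intro borel_measurable_sum) auto
    then show "(\<integral>p. (\<Sum>k\<in>idx N a. \<bar>p k - m k\<bar>) \<partial>Q) \<le> s"
      unfolding Q_def using sp s by (simp add: integral_return m'_def)
  qed
  then show ?thesis by blast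
qed

lemma worst_cvar_eq:
  assumes ne: "ambiguity_set N a R W h m s \<noteq> {}" and i: "i < N"
  shows "worst_cvar N a (ambiguity_set N a R W h m s) (\<lambda>_. 1) i x = - payoff N a m i x"
proof -
  have "worst_cvar N a (ambiguity_set N a R W h m s) (\<lambda>_. 1) i x
      = (SUP Q\<in>ambiguity_set N a R W h m s. - payoff N a m i x)"
    unfolding worst_cvar_def
  proof (intro SUP_cong refl)
    fix Q assume Q: "Q \<in> ambiguity_set N a R W h m s"
    then have "prob_space Q" unfolding ambiguity_set_def by auto
    then show "cvar Q 1 (\<lambda>p. - payoff N a p i x) = - payoff N a m i x"
      using cvar1[OF _ payoff_exp(1)[OF Q i]] payoff_exp(2)[OF Q i] by simp
  qed
  also have "\<dots> = - payoff N a m i x" using ne by simp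
  finally show ?thesis .
qed

theorem proposition1:
  fixes N :: nat and a :: "nat \<Rightarrow> nat" and R :: nat
    and W :: "nat \<Rightarrow> nat \<times> (nat \<Rightarrow> nat) \<Rightarrow> real" and h :: "nat \<Rightarrow> real"
    and m :: "nat \<times> (nat \<Rightarrow> nat) \<Rightarrow> real" and s :: real
  assumes bounded_poly: "\<exists>B. \<forall>p. (\<forall>r<R. (\<Sum>k\<in>idx N a. W r k * p k) \<le> h r)
                              \<longrightarrow> (\<forall>k\<in>idx N a. \<bar>p k\<bar> \<le> B)"
    and m_in: "\<forall>r<R. (\<Sum>k\<in>idx N a. W r k * m k) \<le> h r"
    and s_nonneg: "0 \<le> s"
  shows "{x. DRO_equilibrium N a (ambiguity_set N a R W h m s) (\<lambda>_. 1) x}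
       = {x. Nash_equilibrium N a m x}"
  using worst_cvar_eq[OF ambiguity_nonempty[OF m_in s_nonneg]]
  unfolding DRO_equilibrium_def Nash_equilibrium_def by auto

end
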